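(* Let $L\ge2$, $m\in\mathbb{R}$, $d_0=d_L=1$, $d_1,\dots,d_{L-1}\ge1$, and consider $$\mathcal{L}(\mathbf{w}) = (m-\mathbf{w}_L\mathbf{W}_{L-1}\cdots\mathbf{W}_2\mathbf{w}_1)^2,$$ where $\mathbf{w}_L\in\mathbb{R}^{1\times d_{L-1}}$, $\mathbf{w}_1\in\mathbb{R}^{d_1\times 1}$, $\mathbf{W}_i\in\mathbb{R}^{d_i\times d_{i-1}}$ for $2\le i\le L-1$, and $\mathbf{w}\in\mathbb{R}^N$ is the vector of all parameters, $N=\sum_{i=1}^L d_id_{i-1}$. Let $\mathbf{w}^*=(\mathbf{W}_1^*,\dots,\mathbf{W}_L^* )$ be any global minimizer, i.e. $\prod_{j=1}^L\mathbf{W}_j^*=m$ (writing $\mathbf{W}_1=\mathbf{w}_1$, $\mathbf{W}_L=\mathbf{w}_L$). Then $$\lambda_{\max}(\nabla^2\mathcal{L}(\mathbf{w}^* )) = 2\sum_{i=1}^L \sigma_{\max}\Big(\prod_{j=i+1}^L\mathbf{W}_j^*\Big)^2\,\sigma_{\max}\Big(\prod_{j=1}^{i-1}\mathbf{W}_j^*\Big)^2.$$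
   Context: For matrices $\mathbf{W}_j\in\mathbb{R}^{d_j\times d_{j-1}}$, $\prod_{j=n}^m\mathbf{W}_j := \mathbf{W}_m\mathbf{W}_{m-1}\cdots\mathbf{W}_n$ if $n\le m$, and the identity matrix of the appropriate size if $n>m$. $\sigma_{\max}$ denotes the largest singular value (spectral norm). $\nabla^2\mathcal{L}(\mathbf{w}^* )$ is the $N\times N$ Hessian of $\mathcal{L}$ with respect to $\mathbf{w}$, and $\lambda_{\max}$ its largest eigenvalue. *)

theory Defs
  imports Complex_Main "Jordan_Normal_Form.Char_Poly"
begin

text \<open>Ordered matrix product: mprod W d n m = W m * W (m-1) * ... * W n if n \<le> m,
  and the identity matrix of size d m (= d (n-1)) if n > m (used only for n \<ge> 1).\<close>
fun mprod :: "(nat \<Rightarrow> real mat) \<Rightarrow> (nat \<Rightarrow> nat) \<Rightarrow> nat \<Rightarrow> nat \<Rightarrow> real mat" where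
  "mprod W d n 0 = (if n = 0 then W 0 else 1\<^sub>m (d 0))"
| "mprod W d n (Suc m) = (if n \<le> Suc m then W (Suc m) * mprod W d n m else 1\<^sub>m (d (Suc m)))"

text \<open>Number of parameters N = sum_{i=1}^L d_i d_{i-1}, and the offset of layer i in the
  flattened parameter vector.\<close>
definition offset :: "(nat \<Rightarrow> nat) \<Rightarrow> nat \<Rightarrow> nat" where
  "offset d i = (\<Sum>j\<in>{1..<i}. d j * d (j - 1))"

definition num_params :: "(nat \<Rightarrow> nat) \<Rightarrow> nat \<Rightarrow> nat" where
  "num_params d L = (\<Sum>j\<in>{1..L}. d j * d (j - 1))"

definition layer :: "(nat \<Rightarrow> nat) \<Rightarrow> real vec \<Rightarrow> nat \<Rightarrow> real mat" where
  "layer d w i = mat (d i) (d (i - 1)) (\<lambda>(r, c). w $ (offset d i + r * d (i - 1) + c))"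

definition loss :: "(nat \<Rightarrow> nat) \<Rightarrow> nat \<Rightarrow> real \<Rightarrow> real vec \<Rightarrow> real" where
  "loss d L m w = (m - (mprod (layer d w) d 1 L) $$ (0, 0))\<^sup>2"

definition rderiv :: "(real \<Rightarrow> real) \<Rightarrow> real \<Rightarrow> real" where
  "rderiv f x = (SOME D. (f has_real_derivative D) (at x))"

definition second_partial :: "nat \<Rightarrow> (real vec \<Rightarrow> real) \<Rightarrow> real vec \<Rightarrow> nat \<Rightarrow> nat \<Rightarrow> real" where
  "second_partial N f w a b =
     rderiv (\<lambda>t. rderiv (\<lambda>s. f (w + s \<cdot>\<^sub>v unit_vec N a + t \<cdot>\<^sub>v unit_vec N b)) 0) 0"

definition hessian :: "nat \<Rightarrow> (real vec \<Rightarrow> real) \<Rightarrow> real vec \<Rightarrow> real mat" where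
  "hessian N f w = mat N N (\<lambda>(a, b). second_partial N f w a b)"

definition lambda_max :: "real mat \<Rightarrow> real" where
  "lambda_max A = Max {k. eigenvalue A k}"

definition sigma_max :: "real mat \<Rightarrow> real" where
  "sigma_max A = sqrt (lambda_max (transpose_mat A * A))"

end

theory Submission
  imports Defs
begin


lemma rank1_mult: fixes u :: "real vec" assumes u: "u \<in> carrier_vec n" and v: "v \<in> carrier_vec n"
  shows "mat n n (\<lambda>(x,y). c * u$x * u$y) *\<^sub>v v = (c * (u \<bullet> v)) \<cdot>\<^sub>v u"
proof (rule eq_vecI)
  fix i assume "i < dim_vec ((c * (u \<bullet> v)) \<cdot>\<^sub>v u)"
  hence i: "i < n" using u by auto
  have "(mat n n (\<lambda>(x,y). c * u$x * u$y) *\<^sub>v v) $ i = (\<Sum>j<n. c * u$i * u$j * v$j)"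
    using i u v by (simp add: scalar_prod_def row_def lessThan_atLeast0)
  also have "\<dots> = (c * u$i) * (\<Sum>j<n. u$j * v$j)"
    by (simp add: sum_distrib_left mult.assoc)
  also have "\<dots> = c * (u \<bullet> v) * u $ i"
    using v by (simp add: scalar_prod_def lessThan_atLeast0 mult_ac)
  finally show "(mat n n (\<lambda>(x,y). c * u$x * u$y) *\<^sub>v v) $ i = ((c * (u \<bullet> v)) \<cdot>\<^sub>v u) $ i"
    using i u by simp
qed (use u in auto)

lemma self_scalar_ge0: "(u::real vec) \<bullet> u \<ge> 0"
  unfolding scalar_prod_def by (intro sum_nonneg) auto

lemma lambda_max_rank1:
  fixes u :: "real vec"
  assumes u: "u \<in> carrier_vec n" and n: "n > 0" and c: "c > 0"
  shows "lambda_max (mat n n (\<lambda>(x,y). c * u$x * u$y)) = c * (u \<bullet> u)"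
proof -
  let ?M = "mat n n (\<lambda>(x,y). c * u$x * u$y)"
  have sub: "{k. eigenvalue ?M k} \<subseteq> {0, c * (u \<bullet> u)}"
  proof
    fix k assume "k \<in> {k. eigenvalue ?M k}"
    then obtain v where v: "v \<in> carrier_vec n" "v \<noteq> 0\<^sub>v n" "?M *\<^sub>v v = k \<cdot>\<^sub>v v"
      by (auto simp: eigenvalue_def eigenvector_def)
    have eq: "k \<cdot>\<^sub>v v = (c * (u \<bullet> v)) \<cdot>\<^sub>v u" using v rank1_mult[OF u v(1)] by simp
    show "k \<in> {0, c * (u \<bullet> u)}"
    proof (cases "k = 0")
      case False
      have vv: "v = (c * (u \<bullet> v) / k) \<cdot>\<^sub>v u"
      proof (rule eq_vecI)
        fix i assume "i < dim_vec ((c * (u \<bullet> v) / k) \<cdot>\<^sub>v u)"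
        hence i: "i < n" using u by simp
        have "(k \<cdot>\<^sub>v v) $ i = ((c * (u \<bullet> v)) \<cdot>\<^sub>v u) $ i" using eq by simp
        thus "v $ i = ((c * (u \<bullet> v) / k) \<cdot>\<^sub>v u) $ i" using i u v False by (simp add: field_simps)
      qed (use u v in auto)
      have uv: "u \<bullet> v \<noteq> 0"
      proof
        assume "u \<bullet> v = 0"
        hence "v = 0\<^sub>v n" using vv u by (intro eq_vecI) auto
        thus False using v by simp
      qed
      have "u \<bullet> v = (c * (u \<bullet> v) / k) * (u \<bullet> u)"
        by (subst vv) (use u in \<open>simp add: scalar_prod_smult_right\<close>)
      hence "k = c * (u \<bullet> u)" using uv False by (simp add: field_simps)
      thus ?thesis by simp
    qed simp
  qed
  have fin: "finite {k. eigenvalue ?M k}" by (rule finite_subset[OF sub]) simp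
  have ev: "eigenvalue ?M (c * (u \<bullet> u))"
  proof (cases "u = 0\<^sub>v n")
    case True
    have "eigenvector ?M (unit_vec n 0) (c * (u \<bullet> u))"
      unfolding eigenvector_def using n True
      by (auto simp: rank1_mult[OF u] scalar_prod_def)
    thus ?thesis unfolding eigenvalue_def by blast
  next
    case False
    have "eigenvector ?M u (c * (u \<bullet> u))"
      unfolding eigenvector_def using u False by (simp add: rank1_mult[OF u u])
    thus ?thesis unfolding eigenvalue_def by blast
  qed
  have ge: "c * (u \<bullet> u) \<ge> 0" using c self_scalar_ge0[of u] by simp
  show ?thesis unfolding lambda_max_def
    by (rule Max_eqI[OF fin]) (use sub ev ge in auto)
qed


lemma sigma_row:
  fixes A :: "real mat"
  assumes A: "A \<in> carrier_mat 1 n" and n: "n > 0"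
  shows "(sigma_max A)\<^sup>2 = (\<Sum>x<n. (A $$ (0,x))\<^sup>2)"
proof -
  let ?u = "row A 0"
  have u: "?u \<in> carrier_vec n" using A by auto
  have "transpose_mat A * A = mat n n (\<lambda>(x,y). 1 * ?u$x * ?u$y)"
    by (rule eq_matI) (use A in \<open>auto simp: scalar_prod_def\<close>)
  hence "sigma_max A = sqrt (1 * (?u \<bullet> ?u))"
    unfolding sigma_max_def using lambda_max_rank1[OF u n, of 1] by simp
  moreover have "?u \<bullet> ?u = (\<Sum>x<n. (A $$ (0,x))\<^sup>2)"
    using A by (auto simp: scalar_prod_def power2_eq_square lessThan_atLeast0)
  ultimately show ?thesis using self_scalar_ge0[of ?u] by simp
qed

lemma sigma_col:
  fixes A :: "real mat"
  assumes A: "A \<in> carrier_mat n 1"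
  shows "(sigma_max A)\<^sup>2 = (\<Sum>x<n. (A $$ (x,0))\<^sup>2)"
proof -
  define S where "S = (\<Sum>x<n. (A $$ (x,0))\<^sup>2)"
  have S0: "S \<ge> 0" unfolding S_def by (intro sum_nonneg) auto
  let ?u = "vec 1 (\<lambda>_. sqrt S)"
  have u: "?u \<in> carrier_vec 1" by auto
  have "transpose_mat A * A = mat 1 1 (\<lambda>(x,y). 1 * ?u$x * ?u$y)"
    by (rule eq_matI) (use A S0 in \<open>auto simp: scalar_prod_def S_def power2_eq_square lessThan_atLeast0\<close>)
  hence "sigma_max A = sqrt (1 * (?u \<bullet> ?u))"
    unfolding sigma_max_def using lambda_max_rank1[OF u _, of 1] by simp
  moreover have "?u \<bullet> ?u = S"
    using S0 by (simp add: scalar_prod_def)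
  ultimately show ?thesis using S0 unfolding S_def by simp
qed



lemma mprod_carrier:
  assumes W: "\<And>j. 1 \<le> j \<Longrightarrow> j \<le> L \<Longrightarrow> W j \<in> carrier_mat (d j) (d (j-1))"
  shows "1 \<le> n \<Longrightarrow> n \<le> Suc m \<Longrightarrow> m \<le> L \<Longrightarrow> mprod W d n m \<in> carrier_mat (d m) (d (n-1))"
proof (induction m)
  case 0 thus ?case by auto
next
  case (Suc m)
  show ?case
  proof (cases "n \<le> Suc m")
    case True
    hence "mprod W d n m \<in> carrier_mat (d m) (d (n-1))" using Suc by auto
    moreover have "W (Suc m) \<in> carrier_mat (d (Suc m)) (d m)" using W[of "Suc m"] Suc by auto
    ultimately show ?thesis using True by auto
  next
    case False
    hence "n = Suc (Suc m)" using Suc by auto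
    thus ?thesis by auto
  qed
qed

lemma mprod_empty: "mprod W d (Suc k) k = 1\<^sub>m (d k)" by (cases k) auto

lemma mprod_assoc:
  assumes W: "\<And>j. 1 \<le> j \<Longrightarrow> j \<le> L \<Longrightarrow> W j \<in> carrier_mat (d j) (d (j-1))"
  shows "1 \<le> n \<Longrightarrow> n \<le> Suc k \<Longrightarrow> k \<le> m \<Longrightarrow> m \<le> L \<Longrightarrow>
     mprod W d n m = mprod W d (Suc k) m * mprod W d n k"
proof (induction m)
  case 0
  hence "k = 0" "n = 1" by auto
  thus ?case by simp
next
  case (Suc m)
  have cn: "mprod W d n k \<in> carrier_mat (d k) (d (n-1))"
    using mprod_carrier[of L W d, OF W] Suc.prems by auto
  show ?case
  proof (cases "k = Suc m")
    case True
    thus ?thesis using cn mprod_empty[of W d k] by (simp add: left_mult_one_mat)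
  next
    case False
    hence km: "k \<le> m" using Suc by auto
    have IH: "mprod W d n m = mprod W d (Suc k) m * mprod W d n k" using Suc km by auto
    have c1: "mprod W d (Suc k) m \<in> carrier_mat (d m) (d k)"
      using mprod_carrier[of L W d, OF W, of "Suc k" m] Suc.prems km by auto
    have cW: "W (Suc m) \<in> carrier_mat (d (Suc m)) (d m)" using W[of "Suc m"] Suc.prems by auto
    have "mprod W d n (Suc m) = W (Suc m) * mprod W d n m" using Suc.prems km by simp
    also have "\<dots> = (W (Suc m) * mprod W d (Suc k) m) * mprod W d n k"
      using IH cW c1 cn by simp
    also have "W (Suc m) * mprod W d (Suc k) m = mprod W d (Suc k) (Suc m)" using km by simp
    finally show ?thesis .
  qed
qed

lemma mprod_cong:
  "(\<And>j. n \<le> j \<Longrightarrow> j \<le> m \<Longrightarrow> W j = W' j) \<Longrightarrow> 1 \<le> n \<Longrightarrow> mprod W d n m = mprod W' d n m"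
  by (induction m) auto

lemma split_entry:
  assumes W: "\<And>j. 1 \<le> j \<Longrightarrow> j \<le> L \<Longrightarrow> W j \<in> carrier_mat (d j) (d (j-1))"
    and d0: "d 0 = 1" and dL: "d L = 1" and i: "1 \<le> i" "i \<le> L"
  shows "mprod W d 1 L $$ (0,0) = (\<Sum>r<d i. \<Sum>c<d (i-1).
     mprod W d (Suc i) L $$ (0,r) * W i $$ (r,c) * mprod W d 1 (i-1) $$ (c,0))"
proof -
  define P where "P = mprod W d (Suc i) L"
  define Q where "Q = mprod W d 1 (i-1)"
  have P: "P \<in> carrier_mat 1 (d i)" unfolding P_def using mprod_carrier[of L W d, OF W, of "Suc i" L] i dL by auto
  have Q: "Q \<in> carrier_mat (d (i-1)) 1" unfolding Q_def using mprod_carrier[of L W d, OF W, of 1 "i-1"] i d0 by auto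
  have Wi: "W i \<in> carrier_mat (d i) (d (i-1))" using W i by auto
  have "mprod W d 1 L = P * mprod W d 1 i" unfolding P_def using mprod_assoc[of L W d, OF W, of 1 i L] i by auto
  also have "mprod W d 1 i = W i * Q" unfolding Q_def using i by (cases i) auto
  finally have eq: "mprod W d 1 L = P * (W i * Q)" .
  have "(P * (W i * Q)) $$ (0,0) = (\<Sum>r<d i. P $$ (0,r) * (\<Sum>c<d (i-1). W i $$ (r,c) * Q $$ (c,0)))"
    using P Q Wi by (simp add: scalar_prod_def lessThan_atLeast0)
  also have "\<dots> = (\<Sum>r<d i. \<Sum>c<d (i-1). P $$ (0,r) * W i $$ (r,c) * Q $$ (c,0))"
    by (simp add: sum_distrib_left mult.assoc)
  finally show ?thesis using eq P_def Q_def by simp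
qed


lemma offset_Suc: "1 \<le> j \<Longrightarrow> offset d (Suc j) = offset d j + d j * d (j-1)"
  unfolding offset_def by simp

lemma offset_mono: "j \<le> k \<Longrightarrow> offset d j \<le> offset d k"
  unfolding offset_def by (rule sum_mono2) auto

lemma idx_bound:
  assumes "1 \<le> j" "r < d j" "c < d (j-1)"
  shows "offset d j + r * d (j-1) + c < offset d (Suc j)"
proof -
  have "r * d (j-1) + c < (r + 1) * d (j-1)" using assms by simp
  also have "\<dots> \<le> d j * d (j-1)" using assms by (intro mult_right_mono) auto
  finally show ?thesis using offset_Suc[OF assms(1), of d] by simp
qed

lemma locate:
  "a < offset d (Suc L) \<Longrightarrow> \<exists>i. 1 \<le> i \<and> i \<le> L \<and> offset d i \<le> a \<and> a < offset d (Suc i)"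
proof (induction L)
  case 0 thus ?case by (simp add: offset_def)
next
  case (Suc L)
  show ?case
  proof (cases "a < offset d (Suc L)")
    case True thus ?thesis using Suc.IH by (meson le_SucI)
  next
    case False thus ?thesis using Suc.prems by (intro exI[of _ "Suc L"]) auto
  qed
qed

lemma decompose:
  assumes "1 \<le> i" "offset d i \<le> a" "a < offset d (Suc i)" "d (i-1) > 0"
  shows "\<exists>r c. r < d i \<and> c < d (i-1) \<and> a = offset d i + r * d (i-1) + c"
proof -
  define D where "D = d (i-1)"
  define b where "b = a - offset d i"
  have b: "b < d i * D" using assms offset_Suc[OF assms(1), of d] unfolding b_def D_def by simp
  have "b div D < d i" using b by (simp add: less_mult_imp_div_less)
  moreover have "b mod D < D" using assms unfolding D_def by simp
  moreover have "a = offset d i + (b div D) * D + b mod D" using assms unfolding b_def by simp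
  ultimately show ?thesis unfolding D_def by blast
qed

lemma layer_carrier: "layer d w j \<in> carrier_mat (d j) (d (j-1))"
  unfolding layer_def by simp

lemma layer_index: "r < d j \<Longrightarrow> c < d (j-1) \<Longrightarrow> layer d w j $$ (r,c) = w $ (offset d j + r * d (j-1) + c)"
  unfolding layer_def by simp

lemma key:
  fixes w :: "real vec"
  assumes w: "w \<in> carrier_vec N" and N: "N = offset d (Suc L)"
    and d0: "d 0 = 1" and dL: "d L = 1"
    and i: "1 \<le> i" "i \<le> L" and r: "r < d i" and c: "c < d (i-1)"
    and a: "a = offset d i + r * d (i-1) + c"
  shows "mprod (layer d (w + s \<cdot>\<^sub>v unit_vec N a)) d 1 L $$ (0,0) =
    mprod (layer d w) d 1 L $$ (0,0) + s * (mprod (layer d w) d (Suc i) L $$ (0,r) * mprod (layer d w) d 1 (i-1) $$ (c,0))"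
proof -
  define V where "V = w + s \<cdot>\<^sub>v unit_vec N a"
  have aN: "a < N" using idx_bound[OF i(1) r c] offset_mono[of "Suc i" "Suc L" d] i N a by simp
  have Vidx: "V $ k = w $ k + (if k = a then s else 0)" if "k < N" for k
    using that w aN unfolding V_def by auto
  have other: "layer d V j = layer d w j" if j: "1 \<le> j" "j \<le> L" "j \<noteq> i" for j
  proof (rule eq_matI)
    fix r' c' assume "r' < dim_row (layer d w j)" "c' < dim_col (layer d w j)"
    hence r': "r' < d j" and c': "c' < d (j-1)" using layer_carrier[of d w j] by auto
    let ?k = "offset d j + r' * d (j-1) + c'"
    have k1: "?k < offset d (Suc j)" using idx_bound[OF j(1) r' c'] .
    have kN: "?k < N" using k1 offset_mono[of "Suc j" "Suc L" d] j N by simp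
    have a1: "a < offset d (Suc i)" using idx_bound[OF i(1) r c] a by simp
    have "?k \<noteq> a"
    proof (cases "j < i")
      case True
      hence "offset d (Suc j) \<le> offset d i" by (intro offset_mono) simp
      thus ?thesis using k1 a by auto
    next
      case False
      hence "offset d (Suc i) \<le> offset d j" using j by (intro offset_mono) simp
      thus ?thesis using a1 by auto
    qed
    thus "layer d V j $$ (r',c') = layer d w j $$ (r',c')"
      using layer_index[OF r' c'] Vidx[OF kN] by simp
  qed (auto simp: layer_def)
  have same: "layer d V i $$ (r',c') = layer d w i $$ (r',c') + (if r' = r \<and> c' = c then s else 0)"
    if r': "r' < d i" and c': "c' < d (i-1)" for r' c'
  proof -
    let ?k = "offset d i + r' * d (i-1) + c'"
    have kN: "?k < N" using idx_bound[OF i(1) r' c'] offset_mono[of "Suc i" "Suc L" d] i N by simp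
    have "(?k = a) = (r' = r \<and> c' = c)"
    proof
      assume "?k = a"
      hence e: "r' * d (i-1) + c' = r * d (i-1) + c" using a by simp
      have "r' = (r' * d (i-1) + c') div d (i-1)" using c' by simp
      also have "\<dots> = r" using e c by simp
      finally show "r' = r \<and> c' = c" using e by simp
    qed (use a in simp)
    thus ?thesis using layer_index[OF r' c'] Vidx[OF kN] by simp
  qed
  define P where "P = mprod (layer d w) d (Suc i) L"
  define Q where "Q = mprod (layer d w) d 1 (i-1)"
  have PV: "mprod (layer d V) d (Suc i) L = P" unfolding P_def
    by (rule mprod_cong) (use other in auto)
  have QV: "mprod (layer d V) d 1 (i-1) = Q" unfolding Q_def
    by (rule mprod_cong) (use other i in auto)
  have "mprod (layer d V) d 1 L $$ (0,0) = (\<Sum>r'<d i. \<Sum>c'<d (i-1).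
     P $$ (0,r') * layer d V i $$ (r',c') * Q $$ (c',0))"
    using split_entry[of L "layer d V" d i, OF layer_carrier d0 dL i] PV QV by simp
  also have "\<dots> = (\<Sum>r'<d i. \<Sum>c'<d (i-1).
     P $$ (0,r') * layer d w i $$ (r',c') * Q $$ (c',0) +
     (if c' = c then (if r' = r then s * (P $$ (0,r') * Q $$ (c',0)) else 0) else 0))"
    by (intro sum.cong refl) (auto simp: same algebra_simps)
  also have "\<dots> = (\<Sum>r'<d i. \<Sum>c'<d (i-1). P $$ (0,r') * layer d w i $$ (r',c') * Q $$ (c',0)) +
      s * (P $$ (0,r) * Q $$ (c,0))"
    using r c by (simp add: sum.distrib)
  also have "(\<Sum>r'<d i. \<Sum>c'<d (i-1). P $$ (0,r') * layer d w i $$ (r',c') * Q $$ (c',0))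
     = mprod (layer d w) d 1 L $$ (0,0)"
    using split_entry[of L "layer d w" d i, OF layer_carrier d0 dL i] unfolding P_def Q_def by simp
  finally show ?thesis unfolding V_def P_def Q_def .
qed



lemma rderiv_eq: "(f has_real_derivative D) (at x) \<Longrightarrow> rderiv f x = D"
  unfolding rderiv_def by (rule some_equality) (auto intro: DERIV_unique)

lemma sum_split_add: "(\<Sum>k<(x::nat)+y. (F k::'a::comm_monoid_add)) = (\<Sum>k<x. F k) + (\<Sum>k<y. F (x+k))" 
  by (induction y) (auto simp: add.assoc)

lemma sum_split_mult: "(\<Sum>k<(p::nat)*q. (F k::'a::comm_monoid_add)) = (\<Sum>r<p. \<Sum>c<q. F (r*q+c))"
proof (induction p)
  case (Suc p)
  have "Suc p * q = p * q + q" by simp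
  thus ?case using Suc sum_split_add[of F "p*q" q] by (simp add: add.commute)
qed simp

lemma sum_offsets:
  "(\<Sum>a<offset d (Suc L). F a) = (\<Sum>i\<in>{1..L}. \<Sum>r<d i. \<Sum>c<d (i-1). F (offset d i + r*d (i-1) + c))"
proof (induction L)
  case 0 thus ?case by (simp add: offset_def)
next
  case (Suc L)
  have "offset d (Suc (Suc L)) = offset d (Suc L) + d (Suc L) * d L"
    using offset_Suc[of "Suc L" d] by simp
  hence "(\<Sum>a<offset d (Suc (Suc L)). F a) = (\<Sum>a<offset d (Suc L). F a) +
     (\<Sum>r<d (Suc L). \<Sum>c<d L. F (offset d (Suc L) + (r * d L + c)))"
    using sum_split_add[of F "offset d (Suc L)"] sum_split_mult[of "\<lambda>k. F (offset d (Suc L) + k)"] by simp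
  thus ?case using Suc by (simp add: add.assoc)
qed

theorem theorem1:
  fixes L :: nat and m :: real and d :: "nat \<Rightarrow> nat" and wstar :: "real vec"
  assumes "L \<ge> 2"
    and "d 0 = 1" and "d L = 1"
    and "\<And>i. 1 \<le> i \<Longrightarrow> i \<le> L - 1 \<Longrightarrow> d i \<ge> 1"
    and "wstar \<in> carrier_vec (num_params d L)"
    and "mprod (layer d wstar) d 1 L $$ (0, 0) = m"
  shows "lambda_max (hessian (num_params d L) (loss d L m) wstar) =
    2 * (\<Sum>i\<in>{1..L}. (sigma_max (mprod (layer d wstar) d (i + 1) L))\<^sup>2
                     * (sigma_max (mprod (layer d wstar) d 1 (i - 1)))\<^sup>2)"
proof -
  define N where "N = num_params d L"
  have N: "N = offset d (Suc L)" unfolding N_def num_params_def offset_def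
    by (simp add: atLeastLessThanSuc_atLeastAtMost)
  have dpos: "d j > 0" if "j \<le> L" for j
  proof (cases "j = 0 \<or> j = L")
    case True thus ?thesis using assms(2,3) by auto
  next
    case False hence "1 \<le> j" "j \<le> L - 1" using that by auto
    thus ?thesis using assms(4)[of j] by simp
  qed
  have w: "wstar \<in> carrier_vec N" using assms(5) N_def by simp
  define p where "p = (\<lambda>v. mprod (layer d v) d 1 L $$ (0,0))"
  define G where "G = (\<lambda>v a. p (v + 1 \<cdot>\<^sub>v unit_vec N a) - p v)"
  have lossp: "loss d L m v = (m - p v)\<^sup>2" for v unfolding loss_def p_def by simp
  have keyN: "p (v + s \<cdot>\<^sub>v unit_vec N a) = p v + s * (mprod (layer d v) d (Suc i) L $$ (0,r) * mprod (layer d v) d 1 (i-1) $$ (c,0))"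
    if "v \<in> carrier_vec N" "1 \<le> i" "i \<le> L" "r < d i" "c < d (i-1)" "a = offset d i + r * d (i-1) + c" for v s a i r c
    unfolding p_def by (rule key[OF that(1) N assms(2,3) that(2-6)])
  have Gform: "G v a = mprod (layer d v) d (Suc i) L $$ (0,r) * mprod (layer d v) d 1 (i-1) $$ (c,0)"
    if "v \<in> carrier_vec N" "1 \<le> i" "i \<le> L" "r < d i" "c < d (i-1)" "a = offset d i + r * d (i-1) + c" for v a i r c
    using keyN[OF that, of 1] unfolding G_def by simp
  have affine: "p (v + s \<cdot>\<^sub>v unit_vec N a) = p v + s * G v a" if v: "v \<in> carrier_vec N" and aN: "a < N" for v s a
  proof -
    obtain i where i: "1 \<le> i" "i \<le> L" "offset d i \<le> a" "a < offset d (Suc i)"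
      using locate[of a d L] aN N by auto
    obtain r c where rc: "r < d i" "c < d (i-1)" "a = offset d i + r * d (i-1) + c"
      using decompose[OF i(1,3,4)] dpos[of "i-1"] i by auto
    show ?thesis using keyN[OF v i(1,2) rc, of s] Gform[OF v i(1,2) rc] by simp
  qed
  have entry: "second_partial N (loss d L m) wstar a b = 2 * G wstar a * G wstar b"
    if ab: "a < N" "b < N" for a b
  proof -
    define ea :: "real vec" where "ea = unit_vec N a"
    define eb :: "real vec" where "eb = unit_vec N b"
    define p0 where "p0 = p wstar"
    define C where "C = G (wstar + 1 \<cdot>\<^sub>v eb) a - G wstar a"
    have q: "p (wstar + s \<cdot>\<^sub>v ea + t \<cdot>\<^sub>v eb) = p0 + s * G wstar a + t * G wstar b + s * t * C" for s t
    proof -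
      have ws: "wstar + s \<cdot>\<^sub>v ea \<in> carrier_vec N" using w unfolding ea_def by simp
      have wb: "wstar + 1 \<cdot>\<^sub>v eb \<in> carrier_vec N" using w unfolding eb_def by simp
      have comm: "wstar + s \<cdot>\<^sub>v ea + 1 \<cdot>\<^sub>v eb = wstar + 1 \<cdot>\<^sub>v eb + s \<cdot>\<^sub>v ea"
        using w unfolding ea_def eb_def by (intro eq_vecI) auto
      have "p (wstar + s \<cdot>\<^sub>v ea + t \<cdot>\<^sub>v eb) = p (wstar + s \<cdot>\<^sub>v ea) + t * G (wstar + s \<cdot>\<^sub>v ea) b"
        unfolding eb_def by (rule affine[OF ws ab(2)])
      also have "G (wstar + s \<cdot>\<^sub>v ea) b = p (wstar + 1 \<cdot>\<^sub>v eb + s \<cdot>\<^sub>v ea) - p (wstar + s \<cdot>\<^sub>v ea)"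
        unfolding G_def eb_def[symmetric] comm ..
      also have "p (wstar + 1 \<cdot>\<^sub>v eb + s \<cdot>\<^sub>v ea) = p (wstar + 1 \<cdot>\<^sub>v eb) + s * G (wstar + 1 \<cdot>\<^sub>v eb) a"
        unfolding ea_def by (rule affine[OF wb ab(1)])
      also have "p (wstar + 1 \<cdot>\<^sub>v eb) = p0 + G wstar b" unfolding G_def p0_def eb_def by simp
      also have "p (wstar + s \<cdot>\<^sub>v ea) = p0 + s * G wstar a" unfolding p0_def ea_def by (rule affine[OF w ab(1)])
      finally show ?thesis unfolding C_def by (simp add: algebra_simps)
    qed
    have m: "m = p0" using assms(6) unfolding p0_def p_def by simp
    have inner: "rderiv (\<lambda>s. loss d L m (wstar + s \<cdot>\<^sub>v ea + t \<cdot>\<^sub>v eb)) 0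
        = 2 * (m - (p0 + t * G wstar b)) * (-(G wstar a + t * C))" for t
    proof -
      have "(\<lambda>s. loss d L m (wstar + s \<cdot>\<^sub>v ea + t \<cdot>\<^sub>v eb)) = (\<lambda>s. (m - (p0 + s * G wstar a + t * G wstar b + s * t * C))\<^sup>2)"
        by (simp add: lossp q)
      moreover have "((\<lambda>s. (m - (p0 + s * G wstar a + t * G wstar b + s * t * C))\<^sup>2) has_real_derivative
          2 * (m - (p0 + t * G wstar b)) * (-(G wstar a + t * C))) (at 0)"
        by (auto intro!: derivative_eq_intros simp: algebra_simps)
      ultimately show ?thesis by (simp add: rderiv_eq)
    qed
    have "second_partial N (loss d L m) wstar a b
        = rderiv (\<lambda>t. 2 * (m - (p0 + t * G wstar b)) * (-(G wstar a + t * C))) 0"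
      unfolding second_partial_def ea_def[symmetric] eb_def[symmetric] inner ..
    also have "\<dots> = 2 * G wstar a * G wstar b"
      by (rule rderiv_eq) (auto intro!: derivative_eq_intros simp: m algebra_simps)
    finally show ?thesis .
  qed
  define g where "g = vec N (G wstar)"
  have g: "g \<in> carrier_vec N" unfolding g_def by simp
  have H: "hessian N (loss d L m) wstar = mat N N (\<lambda>(x,y). 2 * g$x * g$y)"
    unfolding hessian_def g_def by (rule eq_matI) (auto simp: entry)
  have Npos: "N > 0"
  proof -
    have "offset d 2 \<le> offset d (Suc L)" using assms(1) by (intro offset_mono) simp
    moreover have "offset d 2 = d 1 * d 0" using offset_Suc[of 1 d] by (simp add: offset_def numeral_2_eq_2)
    moreover have "d 1 > 0" "d 0 > 0" using dpos assms(1) by auto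
    ultimately show ?thesis using N by (metis less_le_trans nat_0_less_mult_iff)
  qed
  have "lambda_max (hessian N (loss d L m) wstar) = 2 * (g \<bullet> g)"
    using lambda_max_rank1[OF g Npos, of 2] H by simp
  also have "g \<bullet> g = (\<Sum>a<N. (G wstar a)\<^sup>2)"
    using g by (simp add: scalar_prod_def g_def power2_eq_square lessThan_atLeast0)
  also have "\<dots> = (\<Sum>i\<in>{1..L}. \<Sum>r<d i. \<Sum>c<d (i-1). (G wstar (offset d i + r*d (i-1) + c))\<^sup>2)"
    unfolding N by (rule sum_offsets)
  also have "\<dots> = (\<Sum>i\<in>{1..L}. (sigma_max (mprod (layer d wstar) d (i + 1) L))\<^sup>2
                     * (sigma_max (mprod (layer d wstar) d 1 (i - 1)))\<^sup>2)"
  proof (rule sum.cong[OF refl])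
    fix i assume "i \<in> {1..L}"
    hence i: "1 \<le> i" "i \<le> L" by auto
    define P where "P = mprod (layer d wstar) d (Suc i) L"
    define Q where "Q = mprod (layer d wstar) d 1 (i-1)"
    have P: "P \<in> carrier_mat 1 (d i)" unfolding P_def
      using mprod_carrier[of L "layer d wstar" d, OF layer_carrier, of "Suc i" L] i assms(3) by auto
    have Q: "Q \<in> carrier_mat (d (i-1)) 1" unfolding Q_def
      using mprod_carrier[of L "layer d wstar" d, OF layer_carrier, of 1 "i-1"] i assms(2) by auto
    have "(\<Sum>r<d i. \<Sum>c<d (i-1). (G wstar (offset d i + r*d (i-1) + c))\<^sup>2)
        = (\<Sum>r<d i. \<Sum>c<d (i-1). (P $$ (0,r))\<^sup>2 * (Q $$ (c,0))\<^sup>2)"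
      using Gform[OF w i] unfolding P_def Q_def by (simp add: power_mult_distrib)
    also have "\<dots> = (\<Sum>r<d i. (P $$ (0,r))\<^sup>2) * (\<Sum>c<d (i-1). (Q $$ (c,0))\<^sup>2)"
      by (simp add: sum_product)
    also have "\<dots> = (sigma_max P)\<^sup>2 * (sigma_max Q)\<^sup>2"
      using sigma_row[OF P dpos[OF i(2)]] sigma_col[OF Q] by simp
    finally show "(\<Sum>r<d i. \<Sum>c<d (i-1). (G wstar (offset d i + r*d (i-1) + c))\<^sup>2) =
       (sigma_max (mprod (layer d wstar) d (i + 1) L))\<^sup>2 * (sigma_max (mprod (layer d wstar) d 1 (i - 1)))\<^sup>2"
      unfolding P_def Q_def by simp
  qed
  finally show ?thesis unfolding N_def .
qed


end
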